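(* Let $n>1$ be an integer, let $\delta>0$ be a real number with $\delta\le (n-1)6^{-n}/c_6$ where $c_6=\sqrt3/8$, and let $M=\{(-2,\dots,-2)+\delta\mathbf z:\mathbf z\in\mathbb{Z}^{n-1}\}\subset\mathbb{R}^{n-1}$. Then $$\#(M\cap I'_{n-1})\le c_7\frac{4^{n-1}}{(n-1)!\,\delta^{n-1}},$$ where $c_7=(1+\sqrt3/162)^3$ and $I'_{n-1}=\{(x_1,\dots,x_{n-1})\in\mathbb{R}^{n-1}: -2\le x_1\le\cdots\le x_{n-1}<2\}$. *)

theory Defs
  imports "HOL-Analysis.Analysis"
begin

text \<open>Points of R^m are represented as functions nat => real that vanish outside {0..<m};
  coordinate x_(i+1) of the paper is x i.\<close>

definition lattice_M :: "nat \<Rightarrow> real \<Rightarrow> (nat \<Rightarrow> real) set" where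
  "lattice_M m \<delta> = {x. \<exists>z :: nat \<Rightarrow> int. (\<forall>i. i \<ge> m \<longrightarrow> z i = 0) \<and>
      (\<forall>i. x i = (if i < m then -2 + \<delta> * real_of_int (z i) else 0))}"

definition I_prime :: "nat \<Rightarrow> (nat \<Rightarrow> real) set" where
  "I_prime m = {x. (\<forall>i. i \<ge> m \<longrightarrow> x i = 0) \<and>
      (\<forall>i. i < m \<longrightarrow> -2 \<le> x i \<and> x i < 2) \<and>
      (\<forall>i j. i \<le> j \<longrightarrow> j < m \<longrightarrow> x i \<le> x j)}"

definition c6 :: real where "c6 = sqrt 3 / 8"
definition c7 :: real where "c7 = (1 + sqrt 3 / 162) ^ 3"

end

theory Submission imports Defs begin

lemma count_le:
  fixes m :: nat and \<delta> :: real
  assumes dp: "\<delta> > 0"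
  defines "K \<equiv> nat (\<lceil>4 / \<delta>\<rceil> - 1)"
  shows "card (lattice_M m \<delta> \<inter> I_prime m) \<le> (K + m) choose m"
proof -
  define S where "S = lattice_M m \<delta> \<inter> I_prime m"
  define zf where "zf x i = \<lfloor>(x i + 2) / \<delta>\<rfloor>" for x :: "nat \<Rightarrow> real" and i
  have key: "x i = -2 + \<delta> * of_int (zf x i) \<and> 0 \<le> zf x i \<and> zf x i \<le> int K"
    if x: "x \<in> S" and i: "i < m" for x i
  proof -
    from x obtain z where z: "\<forall>i. x i = (if i < m then -2 + \<delta> * real_of_int (z i) else 0)"
      unfolding S_def lattice_M_def by auto
    have xi: "x i = -2 + \<delta> * z i" using z i by auto
    have zz: "zf x i = z i" unfolding zf_def xi using dp by simp
    have b: "-2 \<le> x i" "x i < 2" using x i unfolding S_def I_prime_def by auto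
    have "0 \<le> \<delta> * z i" using b xi by simp
    hence z0: "0 \<le> z i" using dp by (simp add: zero_le_mult_iff)
    have "\<delta> * z i < 4" using b xi by simp
    hence "z i < 4 / \<delta>" using dp by (simp add: field_simps)
    hence "z i < \<lceil>4 / \<delta>\<rceil>" by linarith
    hence "z i \<le> int K" unfolding K_def by linarith
    thus ?thesis using xi zz z0 by simp
  qed
  have mono: "zf x i \<le> zf x j" if x: "x \<in> S" and "i \<le> j" "j < m" for x i j
  proof -
    have "x i \<le> x j" using x that unfolding S_def I_prime_def by auto
    hence "\<delta> * zf x i \<le> \<delta> * zf x j" using key[OF x, of i] key[OF x, of j] that by simp
    hence "real_of_int (zf x i) \<le> zf x j" using dp by simp
    thus ?thesis by linarith
  qed
  define l where "l x = map (\<lambda>i. nat (zf x i) + i) [0..<m]" for x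
  have srt: "sorted_wrt (<) (l x)" if x: "x \<in> S" for x
    unfolding sorted_wrt_iff_nth_less l_def
  proof (intro allI impI)
    fix i j assume ij: "i < j" "j < length (map (\<lambda>i. nat (zf x i) + i) [0..<m])"
    hence "j < m" by simp
    with mono[OF x, of i j] ij show "map (\<lambda>i. nat (zf x i) + i) [0..<m] ! i
          < map (\<lambda>i. nat (zf x i) + i) [0..<m] ! j" by simp
  qed
  define B where "B = {A. A \<subseteq> {..<K + m} \<and> card A = m}"
  have "card S \<le> card B"
  proof (rule card_inj_on_le[where f = "\<lambda>x. set (l x)"])
    show "finite B" unfolding B_def by (rule finite_subset[of _ "Pow {..<K+m}"]) auto
    show "(\<lambda>x. set (l x)) ` S \<subseteq> B"
    proof
      fix A assume "A \<in> (\<lambda>x. set (l x)) ` S"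
      then obtain x where x: "x \<in> S" and A: "A = set (l x)" by auto
      have "distinct (l x)" using srt[OF x] by (simp add: strict_sorted_iff)
      hence "card (set (l x)) = length (l x)" by (rule distinct_card)
      hence c: "card A = m" unfolding A by (simp add: l_def)
      have "A \<subseteq> {..<K+m}"
      proof
        fix a assume "a \<in> A"
        then obtain i where i: "i < m" and a: "a = nat (zf x i) + i" unfolding A l_def by auto
        have "nat (zf x i) \<le> K" using key[OF x i] nat_le_iff by blast
        thus "a \<in> {..<K+m}" using a i by simp
      qed
      thus "A \<in> B" using c unfolding B_def by simp
    qed
    show "inj_on (\<lambda>x. set (l x)) S"
    proof (rule inj_onI)
      fix x y assume x: "x \<in> S" and y: "y \<in> S" and e: "set (l x) = set (l y)"
      have ll: "l x = l y" using strict_sorted_equal[OF srt[OF y] srt[OF x] e] .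
      show "x = y"
      proof
        fix i
        show "x i = y i"
        proof (cases "i < m")
          case True
          have "l x ! i = l y ! i" using ll by simp
          hence "nat (zf x i) = nat (zf y i)" using True unfolding l_def by simp
          hence "zf x i = zf y i" using key[OF x True] key[OF y True] eq_nat_nat_iff by blast
          thus ?thesis using key[OF x True] key[OF y True] by simp
        next
          case False
          thus ?thesis using x y unfolding S_def I_prime_def by auto
        qed
      qed
    qed
  qed
  also have "card B = (K + m) choose m" unfolding B_def using n_subsets[of "{..<K+m}" m] by simp
  finally show ?thesis unfolding S_def .
qed

lemma fact_choose_prod: "fact m * ((K + m) choose m) = (\<Prod>j\<in>{1..m}. K + j)"
proof (induction m)
  case 0 then show ?case by simp
next
  case (Suc m)
  have e: "K + Suc m = Suc (K + m)" by simp
  have "fact (Suc m) * ((K + Suc m) choose Suc m) = fact m * (Suc m * (Suc (K + m) choose Suc m))"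
    unfolding e fact_Suc by (simp only: mult_ac of_nat_id)
  also have "Suc m * (Suc (K + m) choose Suc m) = Suc (K + m) * ((K + m) choose m)"
    by (rule Suc_times_binomial)
  also have "fact m * (Suc (K + m) * ((K + m) choose m)) = fact m * ((K + m) choose m) * Suc (K + m)"
    by (simp only: mult_ac)
  also have "\<dots> = (\<Prod>j\<in>{1..m}. K + j) * (K + Suc m)" using Suc by simp
  also have "\<dots> = (\<Prod>j\<in>{1..Suc m}. K + j)" by (simp add: prod.nat_ivl_Suc')
  finally show ?case .
qed
lemma sqrt3: "sqrt 3 > 0" "sqrt 3 * sqrt 3 = 3" "sqrt 3 \<ge> 1.7"
proof -
  have "(1.7::real)^2 \<le> 3" by (simp add: power2_eq_square)
  thus "sqrt 3 \<ge> 1.7" by (rule real_le_rsqrt)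
qed auto

lemma c7_ge: "c7 \<ge> 1 + sqrt 3 / 54"
proof -
  define x where "x = sqrt 3 / 162"
  have x: "x \<ge> 0" using sqrt3 by (simp add: x_def)
  have "1 + 3 * x \<le> (1 + x) ^ 3" using x by (simp add: power3_eq_cube algebra_simps)
  thus ?thesis unfolding c7_def x_def by simp
qed

lemma pow_bound: "m \<ge> 3 \<Longrightarrow> real m ^ 3 * 1296 \<le> 27 * 6 ^ (m + 1)"
proof (induction m rule: dec_induct)
  case base then show ?case by simp
next
  case (step m)
  have "3 * (real m + 1) \<le> 4 * real m" using step by simp
  hence "(3 * (real m + 1)) ^ 3 \<le> (4 * real m) ^ 3" by (rule power_mono) simp
  moreover have "(3 * (real m + 1)) ^ 3 = 27 * (real m + 1) ^ 3" by (subst power_mult_distrib) simp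
  moreover have "(4 * real m) ^ 3 = 64 * real m ^ 3" by (subst power_mult_distrib) simp
  ultimately have "27 * (real m + 1) ^ 3 \<le> 64 * real m ^ 3" by simp
  moreover have "real m ^ 3 \<ge> 0" by simp
  ultimately have "(real m + 1) ^ 3 \<le> 6 * real m ^ 3" by linarith
  hence "(real m + 1) ^ 3 * 1296 \<le> 6 * (real m ^ 3 * 1296)" by simp
  also have "\<dots> \<le> 6 * (27 * 6 ^ (m + 1))" using step by simp
  finally have calc: "(real m + 1) ^ 3 * 1296 \<le> 6 * (27 * 6 ^ (m + 1))" .
  have e1: "real (Suc m) = real m + 1" by simp
  have e2: "(6::real) ^ (Suc m + 1) = 6 * 6 ^ (m + 1)" by simp
  show ?case unfolding e1 e2 using calc by simp
qed

lemma prod_bound: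
  fixes a :: real
  assumes m: "m \<ge> 1" and a: "a > 0" and ab: "a \<le> 2 * m / (6 ^ (m + 1) * sqrt 3)"
  shows "(\<Prod>j\<in>{1..m}. 1 + real j * a) \<le> c7"
proof -
  define s where "s = sqrt 3"
  have s: "s > 0" "s * s = 3" "s \<ge> 1.7" using sqrt3 by (auto simp: s_def)
  have c7: "c7 \<ge> 1 + s / 54" using c7_ge by (simp add: s_def)
  consider "m = 1" | "m = 2" | "m \<ge> 3" using m by linarith
  then show ?thesis
  proof cases
    case 1
    have "a \<le> 2 / (36 * s)" using ab 1 by (simp add: s_def)
    also have "\<dots> = s / 54" using s by (simp add: field_simps)
    finally show ?thesis using 1 c7 by simp
  next
    case 2
    have "a \<le> 4 / (216 * s)" using ab 2 by (simp add: s_def)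
    also have "\<dots> = s / 162" using s by (simp add: field_simps)
    finally have ax: "a \<le> s / 162" .
    have "(1 + a) * (1 + 2 * a) \<le> (1 + s / 162) * (1 + 2 * (s / 162))"
      using ax a by (intro mult_mono) auto
    also have "\<dots> \<le> (1 + s / 162) ^ 3"
    proof -
      have T: "\<And>t::real. t \<ge> 0 \<Longrightarrow> (1 + t) * (1 + 2 * t) \<le> (1 + t) ^ 3"
      proof -
        fix t :: real assume t: "t \<ge> 0"
        have "(1+t)^3 = (1+t)*(1+2*t) + (1+t)*t^2" by (simp add: power3_eq_cube power2_eq_square algebra_simps)
        moreover have "(1+t)*t^2 \<ge> 0" using t by simp
        ultimately show "(1 + t) * (1 + 2 * t) \<le> (1 + t) ^ 3" by linarith
      qed
      from T[of "s/162"] s show ?thesis by simp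
    qed
    finally have "(1 + a) * (1 + 2 * a) \<le> c7" unfolding c7_def s_def .
    moreover have "{1..m} = {1, 2::nat}" using 2 by auto
    ultimately show ?thesis by simp
  next
    case 3
    define y where "y = real m * a"
    have y0: "y \<ge> 0" using a by (simp add: y_def)
    have "real m * y = real m ^ 2 * a" by (simp add: y_def power2_eq_square)
    also have "\<dots> \<le> real m ^ 2 * (2 * m / (6 ^ (m + 1) * s))"
      using ab by (intro mult_left_mono) (auto simp: s_def)
    also have "\<dots> = (real m ^ 3 * 1296) / (6 ^ (m + 1)) / (648 * s)"
      using s by (simp add: field_simps power2_eq_square power3_eq_cube)
    also have "\<dots> \<le> (27 * 6 ^ (m + 1)) / (6 ^ (m + 1)) / (648 * s)"
      using pow_bound[OF 3] s by (intro divide_right_mono) auto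
    also have "\<dots> = 1 / (24 * s)" by simp
    also have "\<dots> \<le> 1 / 40" using s by (simp add: field_simps)
    finally have my: "real m * y \<le> 1 / 40" .
    have "(\<Prod>j\<in>{1..m}. 1 + real j * a) \<le> (\<Prod>j\<in>{1..m}. 1 + y)"
      unfolding y_def using a by (intro prod_mono) (auto intro!: mult_right_mono)
    also have "\<dots> = (1 + y) ^ m" by simp
    finally have p1: "(\<Prod>j\<in>{1..m}. 1 + real j * a) \<le> (1 + y) ^ m" .
    have "1 * y \<le> real m * y" by (rule mult_right_mono) (use 3 y0 in auto)
    hence "y \<le> 1 / 40" using my by simp
    have b: "1 - real m * y \<le> (1 - y) ^ m"
      using Bernoulli_inequality[of "- y" m] \<open>y \<le> 1/40\<close> by simp
    have "(1 + y) ^ m * (1 - y) ^ m = ((1 + y) * (1 - y)) ^ m" by (rule power_mult_distrib[symmetric])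
    also have "(1 + y) * (1 - y) = 1 - y * y" by (simp add: algebra_simps)
    finally have eq: "(1 + y) ^ m * (1 - y) ^ m = (1 - y * y) ^ m" .
    have "(1 - y * y) ^ m \<le> 1"
    proof (rule power_le_one)
      have "y * y \<le> y" using y0 \<open>y \<le> 1/40\<close> by (intro mult_left_le) auto
      thus "0 \<le> 1 - y * y" using \<open>y \<le> 1/40\<close> by linarith
      show "1 - y * y \<le> 1" by simp
    qed
    hence le1: "(1 + y) ^ m * (1 - y) ^ m \<le> 1" using eq by simp
    have le2: "(1 + y) ^ m * (1 - real m * y) \<le> (1 + y) ^ m * (1 - y) ^ m"
      using b y0 by (intro mult_left_mono) auto
    from le2 le1 have "(1 + y) ^ m * (1 - real m * y) \<le> 1" by (rule order_trans)
    hence "(1 + y) ^ m \<le> 1 / (1 - real m * y)" using my by (simp add: field_simps)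
    also have "\<dots> \<le> 1 / (1 - 1 / 40)" using my by (intro divide_left_mono) auto
    also have "\<dots> \<le> 1 + s / 54" using s by simp
    finally show ?thesis using p1 c7 by linarith
  qed
qed

theorem lemma2p3p2:
  fixes n :: nat and \<delta> :: real
  assumes "n > 1" and "\<delta> > 0"
    and "\<delta> \<le> real (n - 1) * 6 powi (- int n) / c6"
  shows "real (card (lattice_M (n - 1) \<delta> \<inter> I_prime (n - 1)))
           \<le> c7 * 4 ^ (n - 1) / (fact (n - 1) * \<delta> ^ (n - 1))"
proof -
  define m where "m = n - 1"
  have n: "n = m + 1" and m1: "m \<ge> 1" using assms(1) by (auto simp: m_def)
  have dp: "\<delta> > 0" by (rule assms(2))
  define s where "s = sqrt 3"
  have s: "s > 0" using sqrt3 by (simp add: s_def)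
  define L where "L = 4 / \<delta>"
  define a where "a = \<delta> / 4"
  have L0: "L > 0" using dp by (simp add: L_def)
  have La: "L * a = 1" using dp by (simp add: L_def a_def)
  define K where "K = nat (\<lceil>4 / \<delta>\<rceil> - 1)"
  have KL: "real K \<le> L"
  proof -
    have "\<lceil>L\<rceil> \<ge> 1" using L0 by (simp add: zero_less_ceiling)
    hence "real K = real_of_int (\<lceil>L\<rceil> - 1)" unfolding K_def L_def by simp
    also have "\<dots> \<le> L" by linarith
    finally show ?thesis .
  qed
  have e6: "(6::real) powi (- int n) = 1 / 6 ^ n" by (simp add: power_int_minus divide_inverse)
  have h: "\<delta> \<le> real m * (1 / 6 ^ n) / c6" using assms(3) unfolding e6 m_def .
  hence h2: "\<delta> \<le> real m * (1 / 6 ^ (m + 1)) / (s / 8)" unfolding n c6_def s_def .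
  have "real m * (1 / 6 ^ (m + 1)) / (s / 8) = 4 * (2 * real m / (6 ^ (m + 1) * s))"
    using s by (simp add: field_simps)
  hence "\<delta> / 4 \<le> 2 * real m / (6 ^ (m + 1) * s)" using h2 by linarith
  hence ab: "a \<le> 2 * real m / (6 ^ (m + 1) * sqrt 3)" by (simp add: a_def s_def)
  have a0: "a > 0" using dp by (simp add: a_def)
  have P: "(\<Prod>j\<in>{1..m}. 1 + real j * a) \<le> c7" by (rule prod_bound[OF m1 a0 ab])
  have cnt: "card (lattice_M m \<delta> \<inter> I_prime m) \<le> (K + m) choose m"
    unfolding K_def by (rule count_le[OF dp])
  have "fact m * real ((K + m) choose m) = real (fact m * ((K + m) choose m))" by simp
  also have "\<dots> = (\<Prod>j\<in>{1..m}. real K + real j)" unfolding fact_choose_prod by simp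
  also have "\<dots> \<le> (\<Prod>j\<in>{1..m}. L + real j)" using KL by (intro prod_mono) auto
  also have "\<dots> = (\<Prod>j\<in>{1..m}. L * (1 + real j * a))"
  proof (rule prod.cong)
    fix j assume "j \<in> {1..m}"
    show "L + real j = L * (1 + real j * a)" using La by (simp add: algebra_simps)
  qed simp
  also have "\<dots> = L ^ m * (\<Prod>j\<in>{1..m}. 1 + real j * a)" by (simp add: prod.distrib)
  also have "\<dots> \<le> L ^ m * c7" using P L0 by (intro mult_left_mono) auto
  finally have F: "fact m * real ((K + m) choose m) \<le> L ^ m * c7" .
  have "real (card (lattice_M m \<delta> \<inter> I_prime m)) \<le> real ((K + m) choose m)"
    using cnt by simp
  also have "\<dots> \<le> L ^ m * c7 / fact m"
    using F by (simp add: pos_le_divide_eq mult.commute)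
  also have "\<dots> = c7 * 4 ^ m / (fact m * \<delta> ^ m)"
    unfolding L_def by (simp add: power_divide field_simps)
  finally show ?thesis unfolding m_def .
qed

end
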